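(* Assume $\lambda_1,\lambda_2\ge0$ with $\lambda_1\lambda_2=0$. Then there exists a unique Nash equilibrium $\theta^*=(\theta_1^*,\theta_2^* )$ of premium strategies for the two competing reinsurers, and the insurer's equilibrium reinsurance strategy is $p^*=\bar p^{\theta^*}$. Moreover: (1) if $\lambda_i=0$ and $\lambda_j>0$ ($\{i,j\}=\{1,2\}$), then $(\theta_i^*,\theta_j^* )$ is the unique fixed point of $(\theta_i,\theta_j)\mapsto(\varphi_i(\theta_j),\varphi_j(\theta_i))$, where $\varphi_j(x)=\frac{(\delta_0+2\delta_j)x+\delta_0\delta_j}{2x+\delta_0}$; (2) if $\lambda_1=\lambda_2=0$, then \[ \theta_1^*=\frac{\delta_1}2+\frac12\sqrt{\frac{\delta_0+\delta_1}{\delta_0+\delta_2}(\delta_0\delta_1+\delta_0\delta_2+\delta_1\delta_2)},\qquad \theta_2^*=\frac{\delta_2}2+\frac12\sqrt{\frac{\delta_0+\delta_2}{\delta_0+\delta_1}(\delta_0\delta_1+\delta_0\delta_2+\delta_1\delta_2)}. \]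
   Context: Setting: over $[0,T]$, an insurer with loss $dL=\mu dt+\sigma dW$ ($\mu,\sigma>0$, $W$ a standard Brownian motion with augmented natural filtration) and income rate $c>0$ cedes proportions $p_1,p_2$ (deterministic, $p_i\in[0,1]$, $p_1+p_2\in[0,1]$) to Reinsurers 1, 2, who charge variance premiums at rate $\mu p_k+\theta_k\sigma^2p_k^2$ with loadings $\theta_k$ (admissible: deterministic, positive, uniformly bounded functions). Agents have exponential utilities $U_k(x)=-\frac1{\delta_k}e^{-\delta_kx}$, $\delta_k>0$ ($k=0$ insurer, $k=1,2$ reinsurers). Insurer's surplus: $dX_0=(c-\mu-\theta_1\sigma^2p_1^2-\theta_2\sigma^2p_2^2)dt-\sigma(1-p_1-p_2)dW$; given $\theta=(\theta_1,\theta_2)$ the insurer chooses $\bar p^\theta$ maximizing $\mathbb E[U_0(X_0(T))\mid X_0(t)=x]$; explicitly $\bar p_1^\theta=\frac{\delta_0\theta_2}{\delta_0\theta_1+\delta_0\theta_2+2\theta_1\theta_2}$, $\bar p_2^\theta=\frac{\delta_0\theta_1}{\delta_0\theta_1+\delta_0\theta_2+2\theta_1\theta_2}$. Reinsurer surplus under this response: $dX_k=\theta_k\sigma^2(\bar p_k^\theta)^2dt-\sigma\bar p_k^\theta dW$. Reinsurer $i$'s relative performance is $Y_i=X_i-\lambda_jX_j$ ($j\ne i$), and for fixed $\theta_j$ Reinsurer $i$ chooses $\bar\theta_i^{\theta_j}$ maximizing $\mathbb E[U_i(Y_i(T))\mid Y_i(t)=y]$. A Nash equilibrium of premium strategies is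 an admissible fixed point $\theta^*$ of $(\theta_1,\theta_2)\mapsto(\bar\theta_1^{\theta_2},\bar\theta_2^{\theta_1})$. For $i\ne j$ define \[ \varphi_i(x)=\frac{(\delta_0+2\delta_i)x^2+(1+\lambda_j)\delta_0\delta_i\,x}{2x^2+\big((1+2\lambda_j)\delta_0+2\lambda_j\delta_i\big)x+\lambda_j(1+\lambda_j)\delta_0\delta_i},\quad x>0, \] which for $\lambda_j=0$ reduces to $\frac{(\delta_0+2\delta_i)x+\delta_0\delta_i}{2x+\delta_0}$. *)

theory Defs
  imports "HOL-Analysis.Analysis" "HOL-Probability.Probability"
begin

text \<open>Reinsurers are indexed by 1 and 2; the competitor of reinsurer i is 3 - i.
  Strategies (proportions p, loadings theta) are families indexed by nat, of which
  only indices 1 and 2 are used; they are deterministic functions of time.\<close>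

definition other :: "nat \<Rightarrow> nat" where
  "other i = 3 - i"

definition U :: "real \<Rightarrow> real \<Rightarrow> real" where
  "U d x = - (1 / d) * exp (- d * x)"

text \<open>Expectation of f(m + G) where G is centred Gaussian with variance v, i.e. of
  f(m + sqrt v * Z), Z standard normal.  For deterministic integrands, the terminal
  value x + int_t^T a ds - sigma int_t^T b dW is exactly distributed like this with
  m = x + int_t^T a ds and v = sigma^2 int_t^T b^2 ds.\<close>
definition gauss_expect :: "(real \<Rightarrow> real) \<Rightarrow> real \<Rightarrow> real \<Rightarrow> real" where
  "gauss_expect f m v = (\<integral> z. std_normal_density z * f (m + sqrt v * z) \<partial>lborel)"

definition adm_loading :: "real \<Rightarrow> (real \<Rightarrow> real) \<Rightarrow> bool" where
  "adm_loading T f \<longleftrightarrow> set_borel_measurable borel {0..T} f \<and>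
      (\<forall>s\<in>{0..T}. f s > 0) \<and> (\<exists>M. \<forall>s\<in>{0..T}. f s \<le> M)"

definition adm_reins :: "real \<Rightarrow> (nat \<Rightarrow> real \<Rightarrow> real) \<Rightarrow> bool" where
  "adm_reins T p \<longleftrightarrow> set_borel_measurable borel {0..T} (p 1) \<and>
      set_borel_measurable borel {0..T} (p 2) \<and>
      (\<forall>s\<in>{0..T}. 0 \<le> p 1 s \<and> p 1 s \<le> 1 \<and> 0 \<le> p 2 s \<and> p 2 s \<le> 1 \<and>
                    0 \<le> p 1 s + p 2 s \<and> p 1 s + p 2 s \<le> 1)"

text \<open>Insurer's objective E[U_0(X_0(T)) | X_0(t) = x] with
  dX_0 = (c - mu - theta_1 sigma^2 p_1^2 - theta_2 sigma^2 p_2^2) dt - sigma (1 - p_1 - p_2) dW.\<close>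
definition J_ins :: "real \<Rightarrow> real \<Rightarrow> real \<Rightarrow> real \<Rightarrow> real \<Rightarrow>
    (nat \<Rightarrow> real \<Rightarrow> real) \<Rightarrow> (nat \<Rightarrow> real \<Rightarrow> real) \<Rightarrow> real \<Rightarrow> real \<Rightarrow> real" where
  "J_ins c mu sg T d0 theta p t x =
     gauss_expect (U d0)
       (x + integral {t..T} (\<lambda>s. c - mu - theta 1 s * sg\<^sup>2 * (p 1 s)\<^sup>2
                                         - theta 2 s * sg\<^sup>2 * (p 2 s)\<^sup>2))
       (sg\<^sup>2 * integral {t..T} (\<lambda>s. (1 - p 1 s - p 2 s)\<^sup>2))"

definition insurer_optimal :: "real \<Rightarrow> real \<Rightarrow> real \<Rightarrow> real \<Rightarrow> real \<Rightarrow>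
    (nat \<Rightarrow> real \<Rightarrow> real) \<Rightarrow> (nat \<Rightarrow> real \<Rightarrow> real) \<Rightarrow> bool" where
  "insurer_optimal c mu sg T d0 theta p \<longleftrightarrow> adm_reins T p \<and>
     (\<forall>t\<in>{0..T}. \<forall>x. \<forall>q. adm_reins T q \<longrightarrow>
        J_ins c mu sg T d0 theta q t x \<le> J_ins c mu sg T d0 theta p t x)"

definition pbar :: "real \<Rightarrow> (nat \<Rightarrow> real) \<Rightarrow> nat \<Rightarrow> real" where
  "pbar d0 th k = d0 * th (other k) / (d0 * th 1 + d0 * th 2 + 2 * th 1 * th 2)"

definition pbar_strat :: "real \<Rightarrow> (nat \<Rightarrow> real \<Rightarrow> real) \<Rightarrow> nat \<Rightarrow> real \<Rightarrow> real" where
  "pbar_strat d0 theta k s = pbar d0 (\<lambda>l. theta l s) k"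

text \<open>Reinsurer i's objective E[U_i(Y_i(T)) | Y_i(t) = y], Y_i = X_i - lambda_j X_j with
  dX_k = theta_k sigma^2 (bar p_k)^2 dt - sigma bar p_k dW (same W for both).\<close>
definition J_rein :: "real \<Rightarrow> real \<Rightarrow> real \<Rightarrow> (nat \<Rightarrow> real) \<Rightarrow> (nat \<Rightarrow> real) \<Rightarrow>
    (nat \<Rightarrow> real \<Rightarrow> real) \<Rightarrow> nat \<Rightarrow> real \<Rightarrow> real \<Rightarrow> real" where
  "J_rein sg T d0 d lam theta i t y =
     (let j = other i; pb = pbar_strat d0 theta in
      gauss_expect (U (d i))
        (y + integral {t..T} (\<lambda>s. theta i s * sg\<^sup>2 * (pb i s)\<^sup>2
                                    - lam j * (theta j s * sg\<^sup>2 * (pb j s)\<^sup>2)))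
        (sg\<^sup>2 * integral {t..T} (\<lambda>s. (pb i s - lam j * pb j s)\<^sup>2)))"

definition best_response :: "real \<Rightarrow> real \<Rightarrow> real \<Rightarrow> (nat \<Rightarrow> real) \<Rightarrow> (nat \<Rightarrow> real) \<Rightarrow>
    (nat \<Rightarrow> real \<Rightarrow> real) \<Rightarrow> nat \<Rightarrow> (real \<Rightarrow> real) \<Rightarrow> bool" where
  "best_response sg T d0 d lam theta i f \<longleftrightarrow> adm_loading T f \<and>
     (\<forall>t\<in>{0..T}. \<forall>y. \<forall>g. adm_loading T g \<longrightarrow>
        J_rein sg T d0 d lam (theta(i := g)) i t y
          \<le> J_rein sg T d0 d lam (theta(i := f)) i t y)"

definition nash_eq :: "real \<Rightarrow> real \<Rightarrow> real \<Rightarrow> (nat \<Rightarrow> real) \<Rightarrow> (nat \<Rightarrow> real) \<Rightarrow>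
    (nat \<Rightarrow> real \<Rightarrow> real) \<Rightarrow> bool" where
  "nash_eq sg T d0 d lam theta \<longleftrightarrow>
     (\<forall>i\<in>{1,2}. best_response sg T d0 d lam theta i (theta i))"

definition varphi :: "real \<Rightarrow> (nat \<Rightarrow> real) \<Rightarrow> (nat \<Rightarrow> real) \<Rightarrow> nat \<Rightarrow> real \<Rightarrow> real" where
  "varphi d0 d lam i x =
     (let j = other i in
      ((d0 + 2 * d i) * x\<^sup>2 + (1 + lam j) * d0 * d i * x) /
      (2 * x\<^sup>2 + ((1 + 2 * lam j) * d0 + 2 * lam j * d i) * x + lam j * (1 + lam j) * d0 * d i))"

end

theory Submission
  imports Defs
begin

lemma quad_ident:
  fixes A B C e m u K P gs :: real
  assumes K: "K = 2*A*m + B*e" and P: "P = B*m + 2*e*C"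
  shows "(-A*gs^2 + B*gs - C) * (e*u+m)^2 - (-A*u^2 + B*u - C) * (e*gs+m)^2
       - ((-A*gs^2 + B*gs - C) * e^2 + A * (e*gs+m)^2) * (u - gs)^2
       = (P - K*gs) * (e*gs+m) * (gs - u)"
  unfolding K P by algebra

lemma quad_c:
  fixes A B C e m K P gs :: real
  assumes K: "K = 2*A*m + B*e" and P: "P = B*m + 2*e*C" and KP: "K*gs = P"
  shows "((-A*gs^2 + B*gs - C) * e^2 + A * (e*gs+m)^2) * K^2
     = K * (e^2*B^2*m + e^3*B*C + 2*A*e^2*C*m + 2*A*B*e*m^2 + A*m^2*K)"
proof -
  have "((-A*gs^2 + B*gs - C) * e^2 + A * (e*gs+m)^2) * K^2
     = e^2*(-A*(K*gs)^2 + B*K*(K*gs) - C*K^2) + A*(e*(K*gs)+m*K)^2" by algebra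
  also have "\<dots> = e^2*(-A*P^2 + B*K*P - C*K^2) + A*(e*P+m*K)^2" by (simp add: KP)
  also have "\<dots> = K * (e^2*B^2*m + e^3*B*C + 2*A*e^2*C*m + 2*A*B*e*m^2 + A*m^2*K)"
    unfolding K P by algebra
  finally show ?thesis .
qed

definition Hr :: "real \<Rightarrow> real \<Rightarrow> real \<Rightarrow> real \<Rightarrow> real \<Rightarrow> real" where
  "Hr d0 dl lm u x = u*(d0*x/(d0*u + d0*x + 2*u*x))^2 - lm*(x*(d0*u/(d0*u + d0*x + 2*u*x))^2)
      - dl/2*(d0*x/(d0*u + d0*x + 2*u*x) - lm*(d0*u/(d0*u + d0*x + 2*u*x)))^2"

definition phi0 :: "real \<Rightarrow> real \<Rightarrow> real \<Rightarrow> real \<Rightarrow> real" where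
  "phi0 d0 dl lm x = ((d0 + 2*dl)*x^2 + (1+lm)*d0*dl*x) /
      (2*x^2 + ((1+2*lm)*d0 + 2*lm*dl)*x + lm*(1+lm)*d0*dl)"

lemma phi0_pos:
  assumes "d0 > 0" "dl > 0" "lm \<ge> 0" "x > 0"
  shows "phi0 d0 dl lm x > 0"
  unfolding phi0_def using assms
  by (intro divide_pos_pos add_pos_nonneg) (auto intro!: mult_nonneg_nonneg add_nonneg_nonneg)

lemma Hr_max:
  assumes d0: "d0 > 0" and dl: "dl > 0" and lm: "lm \<ge> 0" and x: "x > 0" and u: "u > 0"
  shows "Hr d0 dl lm u x \<le> Hr d0 dl lm (phi0 d0 dl lm x) x"
    and "Hr d0 dl lm u x = Hr d0 dl lm (phi0 d0 dl lm x) x \<Longrightarrow> u = phi0 d0 dl lm x"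
proof -
  define A where "A = lm*x + dl*lm^2/2"
  define B where "B = x^2 + dl*lm*x"
  define C where "C = dl*x^2/2"
  define e where "e = d0 + 2*x"
  define m where "m = d0*x"
  define K where "K = 2*A*m + B*e"
  define P where "P = B*m + 2*e*C"
  define gs where "gs = P / K"
  define N where "N = (\<lambda>g. -A*g^2 + B*g - C)"
  have A0: "A \<ge> 0" unfolding A_def using lm x dl by simp
  have B0: "B > 0" unfolding B_def using lm x dl by (simp add: add_pos_nonneg)
  have C0: "C > 0" unfolding C_def using x dl by simp
  have e0: "e > 0" unfolding e_def using d0 x by simp
  have m0: "m > 0" unfolding m_def using d0 x by simp
  have K0: "K > 0" unfolding K_def using A0 B0 e0 m0 by (simp add: add_nonneg_pos)
  have den0: "2*x^2 + ((1+2*lm)*d0 + 2*lm*dl)*x + lm*(1+lm)*d0*dl > 0"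
    using d0 dl lm x by (intro add_pos_nonneg) (auto intro!: mult_nonneg_nonneg add_nonneg_nonneg)
  have Kx: "K = x * (2*x^2 + ((1+2*lm)*d0 + 2*lm*dl)*x + lm*(1+lm)*d0*dl)"
    unfolding K_def A_def B_def m_def e_def by (simp add: algebra_simps power2_eq_square)
  have Px: "P = x * ((d0 + 2*dl)*x^2 + (1+lm)*d0*dl*x)"
    unfolding P_def B_def m_def e_def C_def by (simp add: algebra_simps power2_eq_square)
  have gs_eq: "gs = phi0 d0 dl lm x"
    unfolding gs_def phi0_def Kx Px using x by simp
  have gs0: "gs > 0" using gs_eq phi0_pos[OF d0 dl lm x] by simp
  have Hr_eq: "Hr d0 dl lm g x = d0^2 * N g / (e*g+m)^2" if g: "g > 0" for g
  proof -
    have D: "d0*g + d0*x + 2*g*x = e*g+m" unfolding e_def m_def by (simp add: algebra_simps)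
    have Dp: "e*g+m > 0" using e0 m0 g by (simp add: add_pos_pos)
    have gen: "u*(a/DD)^2 - lm*(x*(b/DD)^2) - dl/2*(a/DD - lm*(b/DD))^2
       = (u*a^2 - lm*x*b^2 - dl/2*(a - lm*b)^2)/DD^2" if "DD \<noteq> 0" for u a b DD :: real
      using that by (simp add: field_simps power2_eq_square)
    have num: "g*(d0*x)^2 - lm*x*(d0*g)^2 - dl/2*(d0*x - lm*(d0*g))^2 = d0^2 * N g"
      unfolding N_def A_def B_def C_def by (simp add: algebra_simps power2_eq_square)
    show ?thesis unfolding Hr_def D using gen[of "e*g+m" g "d0*x" "d0*g"] Dp num by simp
  qed
  define c where "c = N gs * e^2 + A*(e*gs+m)^2"
  have KP: "K*gs = P" unfolding gs_def using K0 by simp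
  have cK: "c * K^2 = K * (e^2*B^2*m + e^3*B*C + 2*A*e^2*C*m + 2*A*B*e*m^2 + A*m^2*K)"
    unfolding c_def N_def by (rule quad_c[OF K_def P_def KP])
  have E0: "e^2*B^2*m + e^3*B*C + 2*A*e^2*C*m + 2*A*B*e*m^2 + A*m^2*K > 0"
    using A0 B0 C0 e0 m0 K0 by (intro add_pos_nonneg) (auto intro!: mult_nonneg_nonneg add_nonneg_nonneg)
  have c0: "c > 0"
  proof -
    have "c * K^2 > 0" using cK E0 K0 by simp
    then show ?thesis using K0 by (simp add: zero_less_mult_iff)
  qed
  have ident: "N gs * (e*u+m)^2 - N u * (e*gs+m)^2 = c * (u - gs)^2"
    using quad_ident[OF K_def P_def, of gs u] KP unfolding N_def c_def by simp
  have Du: "e*u+m > 0" using e0 m0 u by (simp add: add_pos_pos)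
  have Dg: "e*gs+m > 0" using e0 m0 gs0 by (simp add: add_pos_pos)
  have diff: "Hr d0 dl lm gs x - Hr d0 dl lm u x = d0^2 * c * (u - gs)^2 / ((e*u+m)^2 * (e*gs+m)^2)"
  proof -
    have "Hr d0 dl lm gs x - Hr d0 dl lm u x = d0^2 * N gs / (e*gs+m)^2 - d0^2 * N u / (e*u+m)^2"
      using Hr_eq[OF gs0] Hr_eq[OF u] by simp
    also have "\<dots> = d0^2 * (N gs * (e*u+m)^2 - N u * (e*gs+m)^2) / ((e*u+m)^2 * (e*gs+m)^2)"
      using Du Dg by (simp add: field_simps)
    finally show ?thesis using ident by simp
  qed
  have "d0^2 * c * (u - gs)^2 / ((e*u+m)^2 * (e*gs+m)^2) \<ge> 0"
    using c0 by simp
  then show "Hr d0 dl lm u x \<le> Hr d0 dl lm (phi0 d0 dl lm x) x" using diff gs_eq by simp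
  assume "Hr d0 dl lm u x = Hr d0 dl lm (phi0 d0 dl lm x) x"
  then have "d0^2 * c * (u - gs)^2 / ((e*u+m)^2 * (e*gs+m)^2) = 0" using diff gs_eq by simp
  then show "u = phi0 d0 dl lm x" using c0 d0 Du Dg gs_eq by simp
qed

lemma dec_root_unique:
  fixes al c2 c1 c0 b b' :: real
  assumes al: "al > 0" and c0: "c0 \<ge> 0" and c21: "c2 > 0 \<Longrightarrow> c1 \<ge> 0"
    and b: "0 < b" "b < b'"
    and Fb: "-al*b^3 + c2*b^2 + c1*b + c0 = 0" and Fb': "-al*b'^3 + c2*b'^2 + c1*b' + c0 = 0"
  shows False
proof (cases "c2 \<le> 0")
  case True
  have "-al*b^2 + c2*b + c1 + c0/b = 0" using Fb b by (simp add: field_simps power2_eq_square power3_eq_cube)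
  moreover have "-al*b'^2 + c2*b' + c1 + c0/b' = 0" using Fb' b by (simp add: field_simps power2_eq_square power3_eq_cube)
  moreover have "-al*b'^2 < -al*b^2" using al b by (simp add: power_strict_mono)
  moreover have "c2*b' \<le> c2*b" using True b by (simp add: mult_left_mono_neg)
  moreover have "c0/b' \<le> c0/b" using c0 b by (simp add: divide_left_mono)
  ultimately show False by linarith
next
  case False
  then have c1: "c1 \<ge> 0" using c21 by simp
  have "-al*b + c2 + c1/b + c0/b^2 = 0" using Fb b by (simp add: field_simps power2_eq_square power3_eq_cube)
  moreover have "-al*b' + c2 + c1/b' + c0/b'^2 = 0" using Fb' b by (simp add: field_simps power2_eq_square power3_eq_cube)
  moreover have "-al*b' < -al*b" using al b by simp
  moreover have "c1/b' \<le> c1/b" using c1 b by (simp add: divide_left_mono)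
  moreover have "c0/b'^2 \<le> c0/b^2" using c0 b by (simp add: divide_left_mono power_mono)
  ultimately show False by linarith
qed

lemma fixpoint:
  fixes d0 dl dp lm :: real
  assumes d0: "d0 > 0" and dl: "dl > 0" and dp: "dp > 0" and lm: "lm \<ge> 0"
  shows "\<exists>!(a, b). a > 0 \<and> b > 0 \<and> a = phi0 d0 dl lm b \<and> b = phi0 d0 dp 0 a"
proof -
  define Q where "Q = (\<lambda>b::real. 2*b^2 + ((1+2*lm)*d0 + 2*lm*dl)*b + lm*(1+lm)*d0*dl)"
  define nm where "nm = (\<lambda>b::real. (d0 + 2*dl)*b^2 + (1+lm)*d0*dl*b)"
  define F where "F = (\<lambda>b::real. nm b * (d0 + 2*dp - 2*b) - d0*(b - dp)*Q b)"
  define al where "al = 4*(d0+dl)"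
  define c2 where "c2 = 4*dp*(d0+dl) - 2*lm*d0*(2*dl + d0)"
  define c1 where "c1 = (1-lm^2)*dl*d0^2 + (1+2*lm)*dp*d0*(2*dl+d0)"
  define c0 where "c0 = d0 * (lm*(1+lm)*d0*dl) * dp"
  have Fpoly: "F b = -al*b^3 + c2*b^2 + c1*b + c0" for b
    unfolding F_def nm_def Q_def al_def c2_def c1_def c0_def
    by (simp add: algebra_simps power2_eq_square power3_eq_cube)
  have Qpos: "Q b > 0" if "b > 0" for b
    unfolding Q_def using that d0 dl lm
    by (intro add_pos_nonneg) (auto intro!: mult_nonneg_nonneg add_nonneg_nonneg)
  have phi_eq: "phi0 d0 dl lm b = nm b / Q b" for b
    unfolding phi0_def nm_def Q_def by simp
  have al0: "al > 0" unfolding al_def using d0 dl by simp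
  have c00: "c0 \<ge> 0" unfolding c0_def using d0 dl dp lm by simp
  have c21: "c1 \<ge> 0" if "c2 > 0"
  proof -
    have h1: "2*dp*(d0+dl) > lm*d0*(2*dl+d0)" using that unfolding c2_def by (auto simp: algebra_simps)
    have "dp*(2*dl+d0) \<ge> dp*(d0+dl)" using dp dl by simp
    then have "2*(dp*(2*dl+d0)) > lm*d0*(2*dl+d0)" using h1 by linarith
    moreover have "lm*d0*(2*dl+d0) \<ge> lm*d0*(2*dl)" using lm d0 by (simp add: mult_left_mono)
    ultimately have h2: "dp*(2*dl+d0) \<ge> lm*d0*dl" by linarith
    have "(1+2*lm)*d0*(dp*(2*dl+d0)) \<ge> (1+2*lm)*d0*(lm*d0*dl)"
      using h2 lm d0 by (intro mult_left_mono) auto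
    moreover have "(1-lm^2)*dl*d0^2 + (1+2*lm)*d0*(lm*d0*dl) = (1 + lm + lm^2)*dl*d0^2"
      by (simp add: algebra_simps power2_eq_square)
    moreover have "(1 + lm + lm^2)*dl*d0^2 \<ge> 0" using lm dl d0 by simp
    ultimately show ?thesis unfolding c1_def by (simp add: algebra_simps)
  qed
  have root_unique: "b = b'" if "b > 0" "b' > 0" "F b = 0" "F b' = 0" for b b'
  proof (rule ccontr)
    assume "b \<noteq> b'"
    have e1: "-al*b^3 + c2*b^2 + c1*b + c0 = 0" using Fpoly[of b] that(3) by simp
    have e2: "-al*b'^3 + c2*b'^2 + c1*b' + c0 = 0" using Fpoly[of b'] that(4) by simp
    from \<open>b \<noteq> b'\<close> consider "b < b'" | "b' < b" by linarith
    then show False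
    proof cases
      case 1 show False by (rule dec_root_unique[of al c0 c2 c1 b b', OF al0 c00 c21 that(1) 1 e1 e2])
    next
      case 2 show False by (rule dec_root_unique[of al c0 c2 c1 b' b, OF al0 c00 c21 that(2) 2 e2 e1])
    qed
  qed
  have sol_F: "F b = 0" if "a > 0" "b > 0" "a = phi0 d0 dl lm b" "b = phi0 d0 dp 0 a" for a b
  proof -
    have aQ: "a * Q b = nm b" using that(3) phi_eq Qpos[OF that(2)] by (simp add: field_simps)
    have "b * (2*a^2 + d0*a) = (d0 + 2*dp)*a^2 + d0*dp*a"
    proof -
      have "2*a^2 + d0*a > 0" using that(1) d0 by (simp add: add_pos_pos)
      then show ?thesis using that(4) unfolding phi0_def by (simp add: field_simps)
    qed
    then have "a * (b*(2*a + d0)) = a * ((d0 + 2*dp)*a + d0*dp)" by (simp add: algebra_simps power2_eq_square)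
    then have "b*(2*a + d0) = (d0 + 2*dp)*a + d0*dp" using that(1) by simp
    then have ar: "a * (d0 + 2*dp - 2*b) = d0*(b - dp)" by (simp add: algebra_simps)
    show ?thesis unfolding F_def aQ[symmetric] ar[symmetric] by simp
  qed
  have Fl: "F dp > 0" unfolding F_def nm_def using d0 dl dp lm
    by (simp add: add_pos_nonneg)
  have Fr: "F (dp + d0/2) < 0" unfolding F_def using d0 dp Qpos[of "dp + d0/2"] by simp
  have "\<exists>x\<ge>dp. x \<le> dp + d0/2 \<and> F x = 0"
  proof (rule IVT2)
    show "F (dp + d0/2) \<le> 0" using Fr by simp
    show "0 \<le> F dp" using Fl by simp
    show "dp \<le> dp + d0/2" using d0 by simp
    show "\<forall>x. dp \<le> x \<and> x \<le> dp + d0/2 \<longrightarrow> isCont F x"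
      unfolding F_def nm_def Q_def by (auto intro!: continuous_intros)
  qed
  then obtain b where b: "dp \<le> b" "b \<le> dp + d0/2" "F b = 0" by blast
  have b1: "dp < b" using b Fl by (cases "b = dp") auto
  have b2: "b < dp + d0/2" using b Fr by (cases "b = dp + d0/2") auto
  define a where "a = d0*(b - dp)/(d0 + 2*dp - 2*b)"
  have r0: "d0 + 2*dp - 2*b > 0" using b2 by simp
  have a0: "a > 0" unfolding a_def using b1 r0 d0 by simp
  have bpos: "b > 0" using b1 dp by simp
  have ar: "a * (d0 + 2*dp - 2*b) = d0*(b - dp)" unfolding a_def using r0 by simp
  have "nm b * (d0 + 2*dp - 2*b) = d0*(b - dp)*Q b" using b(3) unfolding F_def by simp
  moreover have "(a * Q b) * (d0 + 2*dp - 2*b) = (a * (d0 + 2*dp - 2*b)) * Q b" by (simp add: algebra_simps)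
  ultimately have "(nm b) * (d0 + 2*dp - 2*b) = (a * Q b) * (d0 + 2*dp - 2*b)" using ar by simp
  then have "nm b = a * Q b" using r0 by simp
  then have "a = nm b / Q b" using Qpos[OF bpos] by simp
  then have ea: "a = phi0 d0 dl lm b" using phi_eq by simp
  have eb: "b = phi0 d0 dp 0 a"
  proof -
    have "2*a^2 + d0*a > 0" using a0 d0 by (simp add: add_pos_pos)
    moreover have "b * (2*a^2 + d0*a) = (d0 + 2*dp)*a^2 + d0*dp*a"
    proof -
      have l: "b*(2*a + d0) = (d0+2*dp)*a + d0*dp" using ar by (simp add: algebra_simps)
      have "b * (2*a^2 + d0*a) = a * (b*(2*a + d0))" by (simp add: algebra_simps power2_eq_square)
      also have "\<dots> = (d0 + 2*dp)*a^2 + d0*dp*a" unfolding l by (simp add: algebra_simps power2_eq_square)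
      finally show ?thesis .
    qed
    ultimately show ?thesis unfolding phi0_def by (simp add: field_simps)
  qed
  show ?thesis
  proof (rule ex_ex1I)
    show "\<exists>p. case p of (a, b) \<Rightarrow> a > 0 \<and> b > 0 \<and> a = phi0 d0 dl lm b \<and> b = phi0 d0 dp 0 a"
      apply (rule exI[of _ "(a,b)"]) unfolding case_prod_conv using a0 bpos ea eb by blast
  next
    fix p q assume p: "case p of (a, b) \<Rightarrow> a > 0 \<and> b > 0 \<and> a = phi0 d0 dl lm b \<and> b = phi0 d0 dp 0 a"
      and q: "case q of (a, b) \<Rightarrow> a > 0 \<and> b > 0 \<and> a = phi0 d0 dl lm b \<and> b = phi0 d0 dp 0 a"
    obtain a1 b1 where p1: "p = (a1, b1)" by (cases p)
    obtain a2 b2 where q1: "q = (a2, b2)" by (cases q)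
    have P1: "a1 > 0" "b1 > 0" "a1 = phi0 d0 dl lm b1" "b1 = phi0 d0 dp 0 a1"
      using p unfolding p1 case_prod_conv by blast+
    have P2: "a2 > 0" "b2 > 0" "a2 = phi0 d0 dl lm b2" "b2 = phi0 d0 dp 0 a2"
      using q unfolding q1 case_prod_conv by blast+
    have bb: "b1 = b2" by (rule root_unique[OF P1(2) P2(2) sol_F[OF P1] sol_F[OF P2]])
    have "a1 = a2" using P1(3) P2(3) bb by metis
    then show "p = q" unfolding p1 q1 using bb by simp
  qed
qed

lemma phi0_zero_eq:
  assumes "d0 > 0" "b > 0"
  shows "phi0 d0 dl 0 b = ((d0 + 2*dl)*b + d0*dl) / (2*b + d0)"
proof -
  have "2*b^2 + d0*b = b*(2*b+d0)" "(d0 + 2*dl)*b^2 + d0*dl*b = b*((d0 + 2*dl)*b + d0*dl)"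
    by (simp_all add: algebra_simps power2_eq_square)
  then show ?thesis unfolding phi0_def using assms by simp
qed

lemma explicit_b:
  fixes d0 d1 d2 a b :: real
  assumes d0: "d0 > 0" and d1: "d1 > 0" and d2: "d2 > 0" and a: "a > 0" and b: "b > 0"
    and ea: "a = phi0 d0 d1 0 b" and eb: "b = phi0 d0 d2 0 a"
  shows "b = d2/2 + 1/2 * sqrt ((d0 + d2)/(d0 + d1) * (d0*d1 + d0*d2 + d1*d2))"
proof -
  have eq1: "a*(2*b + d0) = (d0 + 2*d1)*b + d0*d1"
    using ea phi0_zero_eq[OF d0 b, of d1] b d0 by (simp add: field_simps)
  have eq2: "b*(2*a + d0) = (d0 + 2*d2)*a + d0*d2"
    using eb phi0_zero_eq[OF d0 a, of d2] a d0 by (simp add: field_simps)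
  have lin: "(2*d0 + 2*d2)*a = (2*d0 + 2*d1)*b + d0*(d1 - d2)"
    using eq1 eq2 by (simp add: algebra_simps)
  have quad: "(d0+d1)*(2*b - d2)^2 = (d0+d2)*(d0*d1 + d0*d2 + d1*d2)"
    using eq2 lin by algebra
  have "(d0+d2)*(d0*d1 + d0*d2 + d1*d2) - (d0+d1)*d2^2 = d0^2*(d1+d2) + 2*d0*d1*d2"
    by (simp add: algebra_simps power2_eq_square)
  moreover have "d0^2*(d1+d2) + 2*d0*d1*d2 > 0" using d0 d1 d2 by (simp add: add_pos_pos)
  ultimately have "(d0+d1)*(2*b - d2)^2 > (d0+d1)*d2^2" using quad by linarith
  then have sq: "(2*b - d2)^2 > d2^2" using d0 d1 by simp
  have pos: "2*b - d2 > 0"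
  proof (rule ccontr)
    assume "\<not> 2*b - d2 > 0"
    then have "0 \<le> d2 - 2*b" "d2 - 2*b \<le> d2" using b by auto
    then have "(d2 - 2*b)^2 \<le> d2^2" by (intro power_mono) auto
    moreover have "(d2 - 2*b)^2 = (2*b - d2)^2" by (simp add: power2_commute)
    ultimately show False using sq by simp
  qed
  have "(2*b - d2)^2 = (d0 + d2)/(d0 + d1) * (d0*d1 + d0*d2 + d1*d2)"
    using quad d0 d1 by (simp add: field_simps)
  then have "sqrt ((d0 + d2)/(d0 + d1) * (d0*d1 + d0*d2 + d1*d2)) = 2*b - d2"
    using pos by (metis real_sqrt_abs abs_of_pos)
  then show ?thesis by linarith
qed

lemma explicit_a:
  fixes d0 d1 d2 a b :: real
  assumes d0: "d0 > 0" and d1: "d1 > 0" and d2: "d2 > 0" and a: "a > 0" and b: "b > 0"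
    and ea: "a = phi0 d0 d1 0 b" and eb: "b = phi0 d0 d2 0 a"
  shows "a = d1/2 + 1/2 * sqrt ((d0 + d1)/(d0 + d2) * (d0*d1 + d0*d2 + d1*d2))"
proof -
  have "a = d1/2 + 1/2 * sqrt ((d0 + d1)/(d0 + d2) * (d0*d2 + d0*d1 + d2*d1))"
    by (rule explicit_b[OF d0 d2 d1 b a eb ea])
  moreover have "d0*d2 + d0*d1 + d2*d1 = d0*d1 + d0*d2 + d1*d2" by (simp add: algebra_simps)
  ultimately show ?thesis by simp
qed

lemma gauss_U:
  assumes d: "d > 0" and w: "w \<ge> 0"
  shows "gauss_expect (U d) m w = -(1/d) * exp (-d*m + d^2 * w/2)"
proof -
  define s where "s = sqrt w"
  have s2: "s^2 = w" unfolding s_def using w by simp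
  have pt: "std_normal_density t * U d (m + sqrt w * t)
      = (-(1/d) * exp (-d*m + d^2 * w/2)) * normal_density (-d * s) 1 t" for t
  proof -
    have "std_normal_density t * U d (m + sqrt w * t)
        = -(1/d) * (1 / sqrt (2*pi)) * (exp (-(t^2)/2) * exp (-d*(m + s*t)))"
      unfolding std_normal_density_def U_def s_def by simp
    also have "exp (-(t^2)/2) * exp (-d*(m + s*t)) = exp (-d*m + d^2 * w/2) * exp (-((t - (-d * s))^2)/2)"
      unfolding mult_exp_exp s2[symmetric] by (simp add: field_simps power2_eq_square)
    finally show ?thesis unfolding normal_density_def by simp
  qed
  show ?thesis unfolding gauss_expect_def pt by simp
qed

lemma adm_meas:
  fixes f :: "real \<Rightarrow> real"
  assumes "set_borel_measurable borel {0..T} f"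
  shows "f \<in> borel_measurable (restrict_space borel {0..T})"
  using assms borel_measurable_restrict_space_iff[of "{0..T}" borel f] unfolding set_borel_measurable_def
  by simp

lemma set_int_bdd:
  fixes F :: "real \<Rightarrow> real"
  assumes F: "F \<in> borel_measurable (restrict_space borel {a..b})" and B: "\<And>s. s \<in> {a..b} \<Longrightarrow> \<bar>F s\<bar> \<le> M"
  shows "set_integrable lborel {a..b} F"
proof -
  have m: "(\<lambda>x. indicator {a..b} x *\<^sub>R F x) \<in> borel_measurable borel"
    using F by (subst (asm) borel_measurable_restrict_space_iff) auto
  have i: "integrable lborel (\<lambda>x. M * indicator {a..b} x)"
    by (intro integrable_mult_right integrable_real_indicator) (auto simp: emeasure_lborel_Icc_eq)
  show ?thesis unfolding set_integrable_def
  proof (rule Bochner_Integration.integrable_bound[OF i])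
    show "(\<lambda>x. indicator {a..b} x *\<^sub>R F x) \<in> borel_measurable lborel" using m by simp
    show "AE x in lborel. norm (indicator {a..b} x *\<^sub>R F x) \<le> norm (M * indicator {a..b} x)"
    proof (rule AE_I2)
      fix x show "norm (indicator {a..b} x *\<^sub>R F x) \<le> norm (M * indicator {a..b} x)"
        using B[of x] by (cases "x \<in> {a..b}") auto
    qed
  qed
qed

lemma int_on_sub:
  fixes F :: "real \<Rightarrow> real"
  assumes F: "F \<in> borel_measurable (restrict_space borel {0..T})" and B: "\<And>s. s \<in> {0..T} \<Longrightarrow> \<bar>F s\<bar> \<le> M"
    and t: "t \<in> {0..T}"
  shows "F integrable_on {t..T}"
proof -
  have "set_integrable lborel {0..T} F" by (rule set_int_bdd[OF F B])
  then have "set_integrable lborel {t..T} F" by (rule set_integrable_subset) (use t in auto)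
  then show ?thesis by (rule set_borel_integral_eq_integral)
qed

lemma ae_zero:
  fixes F :: "real \<Rightarrow> real"
  assumes F: "F \<in> borel_measurable (restrict_space borel {0..T})" and B: "\<And>s. s \<in> {0..T} \<Longrightarrow> \<bar>F s\<bar> \<le> M"
    and nn: "\<And>s. s \<in> {0..T} \<Longrightarrow> F s \<ge> 0" and le: "integral {0..T} F \<le> 0"
  shows "AE s in lborel. s \<in> {0..T} \<longrightarrow> F s = 0"
proof -
  have si: "set_integrable lborel {0..T} F" by (rule set_int_bdd[OF F B])
  have eq: "(LINT x : {0..T} | lborel. F x) = integral {0..T} F" by (rule set_borel_integral_eq_integral[OF si])
  have nn2: "AE x in lborel. 0 \<le> indicator {0..T} x *\<^sub>R F x"
    by (rule AE_I2) (auto simp: indicator_def nn)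
  have ge: "integral {0..T} F \<ge> 0"
    using nn2 eq unfolding set_lebesgue_integral_def by (metis integral_nonneg_AE)
  have "integral\<^sup>L lborel (\<lambda>x. indicator {0..T} x *\<^sub>R F x) = 0"
    using eq le ge unfolding set_lebesgue_integral_def by simp
  then have "AE x in lborel. indicator {0..T} x *\<^sub>R F x = 0"
    using integral_nonneg_eq_0_iff_AE[OF si[unfolded set_integrable_def] nn2] by simp
  then show ?thesis by eventually_elim (auto simp: indicator_def)
qed

definition P1f :: "real \<Rightarrow> real \<Rightarrow> real \<Rightarrow> real" where
  "P1f d0 u x = d0*x/(d0*u + d0*x + 2*u*x)"
definition P2f :: "real \<Rightarrow> real \<Rightarrow> real \<Rightarrow> real" where
  "P2f d0 u x = d0*u/(d0*u + d0*x + 2*u*x)"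

lemma Hr_P: "Hr d0 dl lm u x = u*(P1f d0 u x)^2 - lm*(x*(P2f d0 u x)^2) - dl/2*(P1f d0 u x - lm*P2f d0 u x)^2"
  unfolding Hr_def P1f_def P2f_def by simp

lemma P_bounds:
  assumes "d0 > 0" "u > 0" "x > 0"
  shows "0 \<le> P1f d0 u x" "P1f d0 u x \<le> 1" "0 \<le> P2f d0 u x" "P2f d0 u x \<le> 1"
proof -
  have D: "d0*u + d0*x + 2*u*x > 0" using assms by (simp add: add_pos_pos)
  have "d0*x \<le> d0*u + d0*x + 2*u*x" "d0*u \<le> d0*u + d0*x + 2*u*x" using assms by simp_all
  then show "0 \<le> P1f d0 u x" "P1f d0 u x \<le> 1" "0 \<le> P2f d0 u x" "P2f d0 u x \<le> 1"
    unfolding P1f_def P2f_def using D assms by simp_all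
qed

lemma sq_bound:
  fixes p q lm :: real
  assumes "0 \<le> p" "p \<le> 1" "0 \<le> q" "q \<le> 1" "lm \<ge> 0"
  shows "(p - lm*q)^2 \<le> (1+lm)^2"
proof -
  have "\<bar>p - lm*q\<bar> \<le> 1 + lm"
  proof -
    have "lm*q \<le> lm" using assms by (simp add: mult_left_le)
    moreover have "0 \<le> lm*q" using assms by simp
    ultimately show ?thesis using assms by linarith
  qed
  then show ?thesis using abs_le_square_iff[of "p - lm*q" "1+lm"] assms by simp
qed

lemma Hr_bound:
  assumes d0: "d0 > 0" and u: "u > 0" and x: "x > 0" and lm: "lm \<ge> 0" and dl: "dl > 0"
  shows "\<bar>Hr d0 dl lm u x\<bar> \<le> u + lm*x + dl/2*(1+lm)^2"
proof -
  note pb = P_bounds[OF d0 u x]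
  have a: "\<bar>u*(P1f d0 u x)^2\<bar> \<le> u"
    using pb u by (simp add: abs_mult mult_left_le power_le_one)
  have b: "\<bar>lm*(x*(P2f d0 u x)^2)\<bar> \<le> lm*x"
    using pb x lm by (simp add: abs_mult mult_left_le power_le_one mult_left_mono)
  have c: "\<bar>dl/2*(P1f d0 u x - lm*P2f d0 u x)^2\<bar> \<le> dl/2*(1+lm)^2"
    using sq_bound[OF pb lm] dl by (simp add: abs_mult)
  show ?thesis unfolding Hr_P using a b c by linarith
qed

lemma Hr_meas:
  fixes u x :: "real \<Rightarrow> real"
  assumes [measurable]: "u \<in> borel_measurable (restrict_space borel {0..T})" "x \<in> borel_measurable (restrict_space borel {0..T})"
  shows "(\<lambda>s. Hr d0 dl lm (u s) (x s)) \<in> borel_measurable (restrict_space borel {0..T})"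
    "(\<lambda>s. (P1f d0 (u s) (x s) - lm * P2f d0 (u s) (x s))^2) \<in> borel_measurable (restrict_space borel {0..T})"
  unfolding Hr_def P1f_def P2f_def by measurable

lemma other_12: "i \<in> {1,2} \<Longrightarrow> other i \<in> {1,2} \<and> other i \<noteq> i \<and> other (other i) = i"
  unfolding other_def by auto

lemma pb_eq:
  assumes i: "i \<in> {1,2}"
  shows "pbar_strat d0 theta i s = P1f d0 (theta i s) (theta (other i) s)"
    "pbar_strat d0 theta (other i) s = P2f d0 (theta i s) (theta (other i) s)"
  using i unfolding pbar_strat_def pbar_def P1f_def P2f_def other_def
  by (auto simp: algebra_simps)

lemma adm_pos_bdd:
  assumes "adm_loading T f"
  shows "f \<in> borel_measurable (restrict_space borel {0..T})" "\<And>s. s \<in> {0..T} \<Longrightarrow> f s > 0"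
    "\<exists>M. \<forall>s\<in>{0..T}. f s \<le> M"
  using assms adm_meas unfolding adm_loading_def by auto

lemma J_rein_eq:
  assumes sg: "sg > 0" and d0: "d0 > 0" and di: "d i > 0" and i: "i \<in> {1,2}" and lm: "lam (other i) \<ge> 0"
    and ai: "adm_loading T (theta i)" and aj: "adm_loading T (theta (other i))" and t: "t \<in> {0..T}"
  shows "J_rein sg T d0 d lam theta i t y = -(1/d i) * exp (-(d i)*y - d i * sg^2 *
            integral {t..T} (\<lambda>s. Hr d0 (d i) (lam (other i)) (theta i s) (theta (other i) s)))"
proof -
  define j where "j = other i"
  define u where "u = theta i"
  define x where "x = theta j"
  define l where "l = lam j"
  define dl where "dl = d i"
  have l0: "l \<ge> 0" using lm unfolding l_def j_def .
  have dl0: "dl > 0" using di unfolding dl_def .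
  have mu: "u \<in> borel_measurable (restrict_space borel {0..T})" and up: "\<And>s. s \<in> {0..T} \<Longrightarrow> u s > 0"
    using adm_pos_bdd[OF ai] unfolding u_def by auto
  obtain Mu where Mu: "\<forall>s\<in>{0..T}. u s \<le> Mu" using adm_pos_bdd(3)[OF ai] unfolding u_def by auto
  have mx: "x \<in> borel_measurable (restrict_space borel {0..T})" and xp: "\<And>s. s \<in> {0..T} \<Longrightarrow> x s > 0"
    using adm_pos_bdd[OF aj] unfolding x_def j_def by auto
  obtain Mx where Mx: "\<forall>s\<in>{0..T}. x s \<le> Mx" using adm_pos_bdd(3)[OF aj] unfolding x_def j_def by auto
  define H where "H = (\<lambda>s. Hr d0 dl l (u s) (x s))"
  define G2 where "G2 = (\<lambda>s. (P1f d0 (u s) (x s) - l * P2f d0 (u s) (x s))^2)"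
  have mH: "H \<in> borel_measurable (restrict_space borel {0..T})" unfolding H_def by (rule Hr_meas[OF mu mx])
  have mG2: "G2 \<in> borel_measurable (restrict_space borel {0..T})" unfolding G2_def by (rule Hr_meas[OF mu mx])
  have bH: "\<bar>H s\<bar> \<le> Mu + l*Mx + dl/2*(1+l)^2" if "s \<in> {0..T}" for s
  proof -
    have "\<bar>H s\<bar> \<le> u s + l * x s + dl/2*(1+l)^2"
      unfolding H_def by (rule Hr_bound[OF d0 up[OF that] xp[OF that] l0 dl0])
    moreover have "l * x s \<le> l * Mx" using Mx that l0 by (simp add: mult_left_mono)
    ultimately show ?thesis using Mu that by force
  qed
  have bG2: "\<bar>G2 s\<bar> \<le> (1+l)^2" if "s \<in> {0..T}" for s
    unfolding G2_def using sq_bound[OF P_bounds[OF d0 up[OF that] xp[OF that]] l0] by simp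
  have iH: "H integrable_on {t..T}" by (rule int_on_sub[OF mH bH t])
  have iG2: "G2 integrable_on {t..T}" by (rule int_on_sub[OF mG2 bG2 t])
  have tT: "{t..T} \<subseteq> {0..T}" using t by auto
  have I1: "integral {t..T} (\<lambda>s. theta i s * sg\<^sup>2 * (pbar_strat d0 theta i s)\<^sup>2
                  - lam j * (theta j s * sg\<^sup>2 * (pbar_strat d0 theta j s)\<^sup>2))
          = integral {t..T} (\<lambda>s. sg^2 * (H s + dl/2 * G2 s))"
  proof (rule integral_cong)
    fix s assume "s \<in> {t..T}"
    show "theta i s * sg\<^sup>2 * (pbar_strat d0 theta i s)\<^sup>2 - lam j * (theta j s * sg\<^sup>2 * (pbar_strat d0 theta j s)\<^sup>2)
        = sg^2 * (H s + dl/2 * G2 s)"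
      unfolding H_def G2_def Hr_P j_def pb_eq[OF i] u_def x_def l_def
      by (simp add: algebra_simps j_def)
  qed
  have I2: "integral {t..T} (\<lambda>s. (pbar_strat d0 theta i s - lam j * pbar_strat d0 theta j s)\<^sup>2) = integral {t..T} G2"
    unfolding G2_def j_def pb_eq[OF i] u_def x_def l_def j_def by simp
  have I1': "integral {t..T} (\<lambda>s. sg^2 * (H s + dl/2 * G2 s)) = sg^2 * (integral {t..T} H + dl/2 * integral {t..T} G2)"
  proof -
    have a: "(\<lambda>s. dl/2 * G2 s) integrable_on {t..T}" using integrable_cmul[OF iG2, of "dl/2"] by simp
    have "integral {t..T} (\<lambda>s. H s + dl/2 * G2 s) = integral {t..T} H + integral {t..T} (\<lambda>s. dl/2 * G2 s)"
      by (rule integral_add[OF iH a])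
    then show ?thesis by simp
  qed
  have G2nn: "integral {t..T} G2 \<ge> 0"
    by (rule integral_nonneg[OF iG2]) (simp add: G2_def)
  have "J_rein sg T d0 d lam theta i t y = gauss_expect (U dl)
        (y + sg^2 * (integral {t..T} H + dl/2 * integral {t..T} G2)) (sg\<^sup>2 * integral {t..T} G2)"
    unfolding J_rein_def Let_def j_def[symmetric] I1 I2 I1' dl_def[symmetric] by (rule refl)
  also have "\<dots> = -(1/dl) * exp (-dl * y - dl * sg^2 * integral {t..T} H)"
  proof -
    have v0: "sg\<^sup>2 * integral {t..T} G2 \<ge> 0" using G2nn by simp
    show ?thesis unfolding gauss_U[OF dl0 v0] by (simp add: algebra_simps power2_eq_square)
  qed
  finally show ?thesis unfolding H_def dl_def l_def u_def x_def j_def .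
qed

lemma phi0_bound:
  assumes d0: "d0 > 0" and dl: "dl > 0" and lm: "lm \<ge> 0" and x: "x > 0"
  shows "phi0 d0 dl lm x \<le> (d0 + 2*dl)/2 + (1+lm)*dl"
proof -
  define M where "M = (d0 + 2*dl)/2 + (1+lm)*dl"
  define den where "den = 2*x^2 + ((1+2*lm)*d0 + 2*lm*dl)*x + lm*(1+lm)*d0*dl"
  have M0: "M \<ge> 0" unfolding M_def using d0 dl lm by simp
  have den0: "den > 0" unfolding den_def using d0 dl lm x
    by (intro add_pos_nonneg) (auto intro!: mult_nonneg_nonneg add_nonneg_nonneg)
  have "den \<ge> 2*x^2 + d0*x"
  proof -
    have "((1+2*lm)*d0 + 2*lm*dl)*x \<ge> d0*x" using d0 dl lm x by (simp add: algebra_simps)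
    moreover have "lm*(1+lm)*d0*dl \<ge> 0" using d0 dl lm by simp
    ultimately show ?thesis unfolding den_def by linarith
  qed
  then have "M*den \<ge> M*(2*x^2 + d0*x)" using M0 by (simp add: mult_left_mono)
  moreover have "M*(2*x^2 + d0*x) - ((d0 + 2*dl)*x^2 + (1+lm)*d0*dl*x) = (1+lm)*dl*2*x^2 + (d0 + 2*dl)/2*d0*x"
    unfolding M_def by (simp add: algebra_simps power2_eq_square)
  moreover have "(1+lm)*dl*2*x^2 + (d0 + 2*dl)/2*d0*x \<ge> 0" using d0 dl lm x by simp
  ultimately have "(d0 + 2*dl)*x^2 + (1+lm)*d0*dl*x \<le> M*den" by linarith
  then show ?thesis unfolding phi0_def den_def[symmetric] M_def[symmetric] using den0
    by (simp add: divide_le_eq)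
qed

lemma phi0_meas:
  fixes x :: "real \<Rightarrow> real"
  assumes [measurable]: "x \<in> borel_measurable (restrict_space borel {0..T})"
  shows "(\<lambda>s. phi0 d0 dl lm (x s)) \<in> borel_measurable (restrict_space borel {0..T})"
  unfolding phi0_def by measurable

lemma adm_intro:
  fixes f :: "real \<Rightarrow> real"
  assumes "f \<in> borel_measurable (restrict_space borel {0..T})" "\<And>s. s \<in> {0..T} \<Longrightarrow> f s > 0"
    "\<And>s. s \<in> {0..T} \<Longrightarrow> f s \<le> M"
  shows "adm_loading T f"
proof -
  have "(\<lambda>x. indicator {0..T} x *\<^sub>R f x) \<in> borel_measurable borel"
    using assms(1) borel_measurable_restrict_space_iff[of "{0..T}" borel f] by simp
  moreover have "\<exists>M. \<forall>s\<in>{0..T}. f s \<le> M" using assms(3) by blast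
  ultimately show ?thesis unfolding adm_loading_def set_borel_measurable_def using assms(2) by blast
qed

lemma J_upd:
  assumes sg: "sg > 0" and d0: "d0 > 0" and di: "d i > 0" and i: "i \<in> {1,2}" and lm: "lam (other i) \<ge> 0"
    and ag: "adm_loading T g" and aj: "adm_loading T (theta (other i))" and t: "t \<in> {0..T}"
  shows "J_rein sg T d0 d lam (theta(i := g)) i t y = -(1/d i) * exp (-(d i)*y - d i * sg^2 *
            integral {t..T} (\<lambda>s. Hr d0 (d i) (lam (other i)) (g s) (theta (other i) s)))"
proof -
  have oi: "other i \<noteq> i" using other_12[OF i] by simp
  have "J_rein sg T d0 d lam (theta(i := g)) i t y = -(1/d i) * exp (-(d i)*y - d i * sg^2 *
            integral {t..T} (\<lambda>s. Hr d0 (d i) (lam (other i)) ((theta(i := g)) i s) ((theta(i := g)) (other i) s)))"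
    by (rule J_rein_eq[where sg=sg and d=d and i=i and lam=lam and theta="theta(i:=g)" and T=T and t=t and y=y, OF sg d0 di i lm]) (use ag aj oi t in auto)
  then show ?thesis using oi by simp
qed

lemma Hr_int:
  assumes d0: "d0 > 0" and dl: "dl > 0" and lm: "lm \<ge> 0" and au: "adm_loading T u" and ax: "adm_loading T x"
  shows "(\<lambda>s. Hr d0 dl lm (u s) (x s)) \<in> borel_measurable (restrict_space borel {0..T})"
    "\<exists>M. \<forall>s\<in>{0..T}. \<bar>Hr d0 dl lm (u s) (x s)\<bar> \<le> M"
proof -
  note U = adm_pos_bdd[OF au] and X = adm_pos_bdd[OF ax]
  show "(\<lambda>s. Hr d0 dl lm (u s) (x s)) \<in> borel_measurable (restrict_space borel {0..T})"
    by (rule Hr_meas(1)[OF U(1) X(1)])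
  obtain Mu where Mu: "\<forall>s\<in>{0..T}. u s \<le> Mu" using U(3) by auto
  obtain Mx where Mx: "\<forall>s\<in>{0..T}. x s \<le> Mx" using X(3) by auto
  have "\<bar>Hr d0 dl lm (u s) (x s)\<bar> \<le> Mu + lm*Mx + dl/2*(1+lm)^2" if s: "s \<in> {0..T}" for s
  proof -
    have "\<bar>Hr d0 dl lm (u s) (x s)\<bar> \<le> u s + lm * x s + dl/2*(1+lm)^2"
      by (rule Hr_bound[OF d0 U(2)[OF s] X(2)[OF s] lm dl])
    moreover have "lm * x s \<le> lm * Mx" using Mx s lm by (simp add: mult_left_mono)
    ultimately show ?thesis using Mu s by force
  qed
  then show "\<exists>M. \<forall>s\<in>{0..T}. \<bar>Hr d0 dl lm (u s) (x s)\<bar> \<le> M" by blast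
qed

lemma best_resp_phi:
  assumes sg: "sg > 0" and d0: "d0 > 0" and di: "d i > 0" and i: "i \<in> {1,2}" and lm: "lam (other i) \<ge> 0"
    and aj: "adm_loading T (theta (other i))" and af: "adm_loading T f"
    and hf: "\<And>s. s \<in> {0..T} \<Longrightarrow> f s = phi0 d0 (d i) (lam (other i)) (theta (other i) s)"
  shows "best_response sg T d0 d lam theta i f"
  unfolding best_response_def
proof (intro conjI af ballI allI impI)
  fix t y g assume t: "t \<in> {0..T}" and ag: "adm_loading T g"
  define x where "x = theta (other i)"
  define l where "l = lam (other i)"
  have l0: "l \<ge> 0" using lm l_def by simp
  obtain Mg where Mg: "\<forall>s\<in>{0..T}. \<bar>Hr d0 (d i) l (g s) (x s)\<bar> \<le> Mg"
    using Hr_int(2)[OF d0 di l0 ag aj[folded x_def]] by blast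
  obtain Mf where Mf: "\<forall>s\<in>{0..T}. \<bar>Hr d0 (d i) l (f s) (x s)\<bar> \<le> Mf"
    using Hr_int(2)[OF d0 di l0 af aj[folded x_def]] by blast
  have ig: "(\<lambda>s. Hr d0 (d i) l (g s) (x s)) integrable_on {t..T}"
    using int_on_sub[OF Hr_int(1)[OF d0 di l0 ag aj[folded x_def]] _ t] Mg by blast
  have if': "(\<lambda>s. Hr d0 (d i) l (f s) (x s)) integrable_on {t..T}"
    using int_on_sub[OF Hr_int(1)[OF d0 di l0 af aj[folded x_def]] _ t] Mf by blast
  have le: "integral {t..T} (\<lambda>s. Hr d0 (d i) l (g s) (x s)) \<le> integral {t..T} (\<lambda>s. Hr d0 (d i) l (f s) (x s))"
  proof (rule integral_le[OF ig if'])
    fix s assume "s \<in> {t..T}"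
    then have s: "s \<in> {0..T}" using t by auto
    have "Hr d0 (d i) l (g s) (x s) \<le> Hr d0 (d i) l (phi0 d0 (d i) l (x s)) (x s)"
      by (rule Hr_max(1)[OF d0 di l0 adm_pos_bdd(2)[OF aj s, folded x_def] adm_pos_bdd(2)[OF ag s]])
    then show "Hr d0 (d i) l (g s) (x s) \<le> Hr d0 (d i) l (f s) (x s)"
      using hf[OF s] unfolding x_def l_def by simp
  qed
  have "d i * sg^2 > 0" using di sg by simp
  then have "exp (-(d i)*y - d i * sg^2 * integral {t..T} (\<lambda>s. Hr d0 (d i) l (f s) (x s)))
      \<le> exp (-(d i)*y - d i * sg^2 * integral {t..T} (\<lambda>s. Hr d0 (d i) l (g s) (x s)))"
    using le by (simp add: mult_left_mono)
  then have "-(1/d i) * exp (-(d i)*y - d i * sg^2 * integral {t..T} (\<lambda>s. Hr d0 (d i) l (g s) (x s)))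
      \<le> -(1/d i) * exp (-(d i)*y - d i * sg^2 * integral {t..T} (\<lambda>s. Hr d0 (d i) l (f s) (x s)))"
    using di by (simp add: divide_le_cancel)
  then show "J_rein sg T d0 d lam (theta(i := g)) i t y \<le> J_rein sg T d0 d lam (theta(i := f)) i t y"
    unfolding J_upd[where sg=sg and d=d and i=i and lam=lam and theta=theta and g=g and T=T and t=t and y=y, OF sg d0 di i lm ag aj t]
      J_upd[where sg=sg and d=d and i=i and lam=lam and theta=theta and g=f and T=T and t=t and y=y, OF sg d0 di i lm af aj t] x_def l_def .
qed

lemma br_unique:
  assumes sg: "sg > 0" and d0: "d0 > 0" and di: "d i > 0" and i: "i \<in> {1,2}" and lm: "lam (other i) \<ge> 0"
    and T: "T \<ge> 0" and aj: "adm_loading T (theta (other i))" and br: "best_response sg T d0 d lam theta i (theta i)"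
  shows "AE s in lborel. s \<in> {0..T} \<longrightarrow> theta i s = phi0 d0 (d i) (lam (other i)) (theta (other i) s)"
proof -
  define x where "x = theta (other i)"
  define l where "l = lam (other i)"
  define u where "u = theta i"
  have l0: "l \<ge> 0" using lm l_def by simp
  have ai: "adm_loading T u" using br unfolding best_response_def u_def by blast
  have ax: "adm_loading T x" using aj x_def by simp
  define g where "g = (\<lambda>s. phi0 d0 (d i) l (x s))"
  note X = adm_pos_bdd[OF ax]
  have ag: "adm_loading T g"
  proof (rule adm_intro)
    show "g \<in> borel_measurable (restrict_space borel {0..T})" unfolding g_def by (rule phi0_meas[OF X(1)])
    show "g s > 0" if "s \<in> {0..T}" for s unfolding g_def by (rule phi0_pos[OF d0 di l0 X(2)[OF that]])
    show "g s \<le> (d0 + 2*d i)/2 + (1+l)*d i" if "s \<in> {0..T}" for s unfolding g_def by (rule phi0_bound[OF d0 di l0 X(2)[OF that]])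
  qed
  have t0: "0 \<in> {0..T}" using T by simp
  have "J_rein sg T d0 d lam (theta(i := g)) i 0 0 \<le> J_rein sg T d0 d lam (theta(i := theta i)) i 0 0"
    using br ag t0 unfolding best_response_def by blast
  then have "-(1/d i) * exp (-(d i)*0 - d i * sg^2 * integral {0..T} (\<lambda>s. Hr d0 (d i) l (g s) (x s)))
      \<le> -(1/d i) * exp (-(d i)*0 - d i * sg^2 * integral {0..T} (\<lambda>s. Hr d0 (d i) l (u s) (x s)))"
    unfolding J_upd[where sg=sg and d=d and i=i and lam=lam and theta=theta and g=g and T=T and t=0 and y=0, OF sg d0 di i lm ag aj t0]
      J_upd[where sg=sg and d=d and i=i and lam=lam and theta=theta and g="theta i" and T=T and t=0 and y=0, OF sg d0 di i lm ai[unfolded u_def] aj t0]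
      x_def l_def u_def .
  then have "exp (- d i * sg^2 * integral {0..T} (\<lambda>s. Hr d0 (d i) l (u s) (x s)))
      \<le> exp (- d i * sg^2 * integral {0..T} (\<lambda>s. Hr d0 (d i) l (g s) (x s)))"
    using di by (simp add: divide_le_cancel)
  then have "d i * sg^2 * integral {0..T} (\<lambda>s. Hr d0 (d i) l (g s) (x s))
      \<le> d i * sg^2 * integral {0..T} (\<lambda>s. Hr d0 (d i) l (u s) (x s))" by simp
  moreover have "d i * sg^2 > 0" using di sg by simp
  ultimately have le: "integral {0..T} (\<lambda>s. Hr d0 (d i) l (g s) (x s)) \<le> integral {0..T} (\<lambda>s. Hr d0 (d i) l (u s) (x s))"
    by (simp add: mult_le_cancel_left_pos)
  obtain Mg where Mg: "\<forall>s\<in>{0..T}. \<bar>Hr d0 (d i) l (g s) (x s)\<bar> \<le> Mg"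
    using Hr_int(2)[OF d0 di l0 ag ax] by blast
  obtain Mu where Mu: "\<forall>s\<in>{0..T}. \<bar>Hr d0 (d i) l (u s) (x s)\<bar> \<le> Mu"
    using Hr_int(2)[OF d0 di l0 ai ax] by blast
  note mg = Hr_int(1)[OF d0 di l0 ag ax] and mu = Hr_int(1)[OF d0 di l0 ai ax]
  have ig: "(\<lambda>s. Hr d0 (d i) l (g s) (x s)) integrable_on {0..T}"
    using int_on_sub[OF mg _ t0] Mg by blast
  have iu: "(\<lambda>s. Hr d0 (d i) l (u s) (x s)) integrable_on {0..T}"
    using int_on_sub[OF mu _ t0] Mu by blast
  define Psi where "Psi = (\<lambda>s. Hr d0 (d i) l (g s) (x s) - Hr d0 (d i) l (u s) (x s))"
  have "AE s in lborel. s \<in> {0..T} \<longrightarrow> Psi s = 0"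
  proof (rule ae_zero)
    show "Psi \<in> borel_measurable (restrict_space borel {0..T})"
      unfolding Psi_def using mg mu by (rule borel_measurable_diff)
    show "\<bar>Psi s\<bar> \<le> Mg + Mu" if "s \<in> {0..T}" for s
      using Mg Mu that unfolding Psi_def by fastforce
    show "Psi s \<ge> 0" if s: "s \<in> {0..T}" for s
      using Hr_max(1)[OF d0 di l0 X(2)[OF s] adm_pos_bdd(2)[OF ai s]] unfolding Psi_def g_def by simp
    show "integral {0..T} Psi \<le> 0" unfolding Psi_def using integral_diff[OF ig iu] le by simp
  qed
  then show ?thesis
  proof (rule AE_mp, intro AE_I2 impI)
    fix s assume h: "s \<in> {0..T} \<longrightarrow> Psi s = 0" and s: "s \<in> {0..T}"
    have "Hr d0 (d i) l (u s) (x s) = Hr d0 (d i) l (phi0 d0 (d i) l (x s)) (x s)"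
      using h s unfolding Psi_def g_def by simp
    then show "theta i s = phi0 d0 (d i) (lam (other i)) (theta (other i) s)"
      using Hr_max(2)[OF d0 di l0 X(2)[OF s] adm_pos_bdd(2)[OF ai s]] unfolding u_def x_def l_def by simp
  qed
qed

definition Hi :: "real \<Rightarrow> real \<Rightarrow> real \<Rightarrow> real \<Rightarrow> real \<Rightarrow> real" where
  "Hi a1 a2 d0 q1 q2 = a1*q1^2 + a2*q2^2 + d0/2*(1-q1-q2)^2"

lemma Hi_min:
  fixes a1 a2 d0 q1 q2 :: real
  assumes a1: "a1 > 0" and a2: "a2 > 0" and d0: "d0 > 0"
  shows "Hi a1 a2 d0 (d0*a2/(d0*a1 + d0*a2 + 2*a1*a2)) (d0*a1/(d0*a1 + d0*a2 + 2*a1*a2)) \<le> Hi a1 a2 d0 q1 q2"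
proof -
  define Den where "Den = d0*a1 + d0*a2 + 2*a1*a2"
  define p1 where "p1 = d0*a2/Den"
  define p2 where "p2 = d0*a1/Den"
  have D0: "Den > 0" unfolding Den_def using a1 a2 d0 by (simp add: add_pos_pos)
  have r: "1 - p1 - p2 = 2*a1*a2/Den"
  proof -
    have "1 - p1 - p2 = (Den - d0*a2 - d0*a1)/Den" unfolding p1_def p2_def using D0 by (simp add: field_simps)
    then show ?thesis unfolding Den_def by simp
  qed
  have f1: "2*a1*p1 - d0*(1-p1-p2) = 0" unfolding r unfolding p1_def using D0 by (simp add: field_simps)
  have f2: "2*a2*p2 - d0*(1-p1-p2) = 0" unfolding r unfolding p2_def using D0 by (simp add: field_simps)
  have id: "Hi a1 a2 d0 q1 q2 - Hi a1 a2 d0 p1 p2 = a1*(q1-p1)^2 + a2*(q2-p2)^2 + d0/2*((q1-p1)+(q2-p2))^2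
     + (q1-p1)*(2*a1*p1 - d0*(1-p1-p2)) + (q2-p2)*(2*a2*p2 - d0*(1-p1-p2))"
    unfolding Hi_def by (simp add: algebra_simps power2_eq_square)
  have "a1*(q1-p1)^2 + a2*(q2-p2)^2 + d0/2*((q1-p1)+(q2-p2))^2 \<ge> 0" using a1 a2 d0 by simp
  then show ?thesis using id f1 f2 unfolding p1_def p2_def Den_def by simp
qed

lemma reins_meas:
  assumes "adm_reins T q"
  shows "q 1 \<in> borel_measurable (restrict_space borel {0..T})" "q 2 \<in> borel_measurable (restrict_space borel {0..T})"
  using assms adm_meas unfolding adm_reins_def by auto

lemma J_ins_eq:
  assumes sg: "sg > 0" and d0: "d0 > 0" and a1: "a1 > 0" and a2: "a2 > 0"
    and th1: "\<And>s. theta 1 s = a1" and th2: "\<And>s. theta 2 s = a2"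
    and q: "adm_reins T q" and t: "t \<in> {0..T}"
  shows "J_ins c mu sg T d0 theta q t x = -(1/d0) * exp (-d0*x - d0 * integral {t..T} (\<lambda>s. c - mu)
           + d0 * sg^2 * integral {t..T} (\<lambda>s. Hi a1 a2 d0 (q 1 s) (q 2 s)))"
proof -
  note m1 = reins_meas(1)[OF q] and m2 = reins_meas(2)[OF q]
  have qb: "0 \<le> q 1 s" "q 1 s \<le> 1" "0 \<le> q 2 s" "q 2 s \<le> 1" "q 1 s + q 2 s \<le> 1" if "s \<in> {0..T}" for s
    using q that unfolding adm_reins_def by auto
  define G where "G = (\<lambda>s. a1 * (q 1 s)^2 + a2 * (q 2 s)^2)"
  define F2 where "F2 = (\<lambda>s. (1 - q 1 s - q 2 s)^2)"
  have mG: "G \<in> borel_measurable (restrict_space borel {0..T})" unfolding G_def using m1 m2 by measurable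
  have mF2: "F2 \<in> borel_measurable (restrict_space borel {0..T})" unfolding F2_def using m1 m2 by measurable
  have bG: "\<bar>G s\<bar> \<le> a1 + a2" if "s \<in> {0..T}" for s
  proof -
    have "(q 1 s)^2 \<le> 1" "(q 2 s)^2 \<le> 1" using qb[OF that] by (auto simp: power_le_one)
    then have "a1 * (q 1 s)^2 \<le> a1" "a2 * (q 2 s)^2 \<le> a2"
      using mult_left_le[of "(q 1 s)^2" a1] mult_left_le[of "(q 2 s)^2" a2] a1 a2 by auto
    moreover have "0 \<le> a1 * (q 1 s)^2" "0 \<le> a2 * (q 2 s)^2" using a1 a2 by auto
    ultimately show ?thesis unfolding G_def by (simp add: abs_le_iff)
  qed
  have bF2: "\<bar>F2 s\<bar> \<le> 1" if "s \<in> {0..T}" for s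
    unfolding F2_def using qb[OF that] by (auto simp: power_le_one)
  have iG: "G integrable_on {t..T}" by (rule int_on_sub[OF mG bG t])
  have iF2: "F2 integrable_on {t..T}" by (rule int_on_sub[OF mF2 bF2 t])
  have ic: "(\<lambda>s. c - mu) integrable_on {t..T}" by (rule Henstock_Kurzweil_Integration.integrable_const_ivl)
  have I1: "integral {t..T} (\<lambda>s. c - mu - theta 1 s * sg\<^sup>2 * (q 1 s)\<^sup>2 - theta 2 s * sg\<^sup>2 * (q 2 s)\<^sup>2)
      = integral {t..T} (\<lambda>s. c - mu) - sg^2 * integral {t..T} G"
  proof -
    have "integral {t..T} (\<lambda>s. c - mu - theta 1 s * sg\<^sup>2 * (q 1 s)\<^sup>2 - theta 2 s * sg\<^sup>2 * (q 2 s)\<^sup>2)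
        = integral {t..T} (\<lambda>s. (c - mu) - sg^2 * G s)"
      unfolding G_def th1 th2 by (simp add: algebra_simps)
    also have "\<dots> = integral {t..T} (\<lambda>s. c - mu) - integral {t..T} (\<lambda>s. sg^2 * G s)"
      by (rule integral_diff[OF ic]) (use integrable_cmul[OF iG, of "sg^2"] in simp)
    finally show ?thesis by simp
  qed
  have I2: "integral {t..T} (\<lambda>s. Hi a1 a2 d0 (q 1 s) (q 2 s)) = integral {t..T} G + d0/2 * integral {t..T} F2"
  proof -
    have "integral {t..T} (\<lambda>s. Hi a1 a2 d0 (q 1 s) (q 2 s)) = integral {t..T} (\<lambda>s. G s + d0/2 * F2 s)"
      unfolding Hi_def G_def F2_def by simp
    also have "\<dots> = integral {t..T} G + integral {t..T} (\<lambda>s. d0/2 * F2 s)"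
      by (rule integral_add[OF iG]) (use integrable_cmul[OF iF2, of "d0/2"] in simp)
    finally show ?thesis by simp
  qed
  have F2nn: "integral {t..T} F2 \<ge> 0" by (rule integral_nonneg[OF iF2]) (simp add: F2_def)
  have v0: "sg\<^sup>2 * integral {t..T} F2 \<ge> 0" using F2nn by simp
  have "J_ins c mu sg T d0 theta q t x = gauss_expect (U d0) (x + (integral {t..T} (\<lambda>s. c - mu) - sg^2 * integral {t..T} G))
       (sg\<^sup>2 * integral {t..T} F2)"
    unfolding J_ins_def I1 F2_def by (rule refl)
  also have "\<dots> = -(1/d0) * exp (-d0*x - d0 * integral {t..T} (\<lambda>s. c - mu)
           + d0 * sg^2 * (integral {t..T} G + d0/2 * integral {t..T} F2))"
    unfolding gauss_U[OF d0 v0] by (simp add: algebra_simps power2_eq_square)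
  finally show ?thesis unfolding I2 .
qed

lemma insurer_opt:
  assumes sg: "sg > 0" and d0: "d0 > 0" and a1: "a1 > 0" and a2: "a2 > 0"
    and th1: "\<And>s. theta 1 s = a1" and th2: "\<And>s. theta 2 s = a2"
  shows "insurer_optimal c mu sg T d0 theta (pbar_strat d0 theta)"
proof -
  define Den where "Den = d0*a1 + d0*a2 + 2*a1*a2"
  have D0: "Den > 0" unfolding Den_def using a1 a2 d0 by (simp add: add_pos_pos)
  have th1': "\<And>s. theta (Suc 0) s = a1" using th1 by simp
  have p1: "pbar_strat d0 theta 1 = (\<lambda>s. d0*a2/Den)"
    unfolding pbar_strat_def pbar_def other_def Den_def by (simp add: th1 th2 th1')
  have p2: "pbar_strat d0 theta 2 = (\<lambda>s. d0*a1/Den)"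
    unfolding pbar_strat_def pbar_def other_def Den_def by (simp add: th1 th2 th1')
  have r: "d0*a2/Den + d0*a1/Den \<le> 1"
  proof -
    have "d0*a2/Den + d0*a1/Den = (d0*a2 + d0*a1)/Den" by (simp add: add_divide_distrib)
    moreover have "d0*a2 + d0*a1 \<le> Den" unfolding Den_def using a1 a2 by simp
    ultimately show ?thesis using D0 by simp
  qed
  have adm: "adm_reins T (pbar_strat d0 theta)"
    unfolding adm_reins_def p1 p2 set_borel_measurable_def
    using D0 a1 a2 d0 r by (auto simp: divide_le_eq Den_def)
  show ?thesis unfolding insurer_optimal_def
  proof (intro conjI adm ballI allI impI)
    fix t x q assume t: "t \<in> {0..T}" and q: "adm_reins T q"
    have le: "integral {t..T} (\<lambda>s. Hi a1 a2 d0 (pbar_strat d0 theta 1 s) (pbar_strat d0 theta 2 s))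
        \<le> integral {t..T} (\<lambda>s. Hi a1 a2 d0 (q 1 s) (q 2 s))"
    proof (rule integral_le)
      show "(\<lambda>s. Hi a1 a2 d0 (pbar_strat d0 theta 1 s) (pbar_strat d0 theta 2 s)) integrable_on {t..T}"
        unfolding p1 p2 by (rule Henstock_Kurzweil_Integration.integrable_const_ivl)
      have mG: "(\<lambda>s. Hi a1 a2 d0 (q 1 s) (q 2 s)) \<in> borel_measurable (restrict_space borel {0..T})"
        unfolding Hi_def using reins_meas[OF q] by measurable
      have qb: "0 \<le> q 1 s" "q 1 s \<le> 1" "0 \<le> q 2 s" "q 2 s \<le> 1" "0 \<le> q 1 s + q 2 s" "q 1 s + q 2 s \<le> 1" if "s \<in> {0..T}" for s
        using q that unfolding adm_reins_def by auto
      have "\<bar>Hi a1 a2 d0 (q 1 s) (q 2 s)\<bar> \<le> a1 + a2 + d0/2" if "s \<in> {0..T}" for s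
      proof -
        have "(q 1 s)^2 \<le> 1" "(q 2 s)^2 \<le> 1" "(1 - q 1 s - q 2 s)^2 \<le> 1" using qb[OF that] by (auto simp: power_le_one)
        then have "a1 * (q 1 s)^2 \<le> a1" "a2 * (q 2 s)^2 \<le> a2" "d0/2 * (1 - q 1 s - q 2 s)^2 \<le> d0/2"
          using mult_left_le[of "(q 1 s)^2" a1] mult_left_le[of "(q 2 s)^2" a2]
            mult_left_le[of "(1 - q 1 s - q 2 s)^2" "d0/2"] a1 a2 d0 by auto
        moreover have "0 \<le> a1 * (q 1 s)^2" "0 \<le> a2 * (q 2 s)^2" "0 \<le> d0/2 * (1 - q 1 s - q 2 s)^2"
          using a1 a2 d0 by auto
        ultimately show ?thesis unfolding Hi_def by (simp add: abs_le_iff)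
      qed
      then show "(\<lambda>s. Hi a1 a2 d0 (q 1 s) (q 2 s)) integrable_on {t..T}" by (rule int_on_sub[OF mG _ t])
      fix s show "Hi a1 a2 d0 (pbar_strat d0 theta 1 s) (pbar_strat d0 theta 2 s) \<le> Hi a1 a2 d0 (q 1 s) (q 2 s)"
        unfolding p1 p2 Den_def by (rule Hi_min[OF a1 a2 d0])
    qed
    have "d0 * sg^2 > 0" using d0 sg by simp
    then have "exp (-d0*x - d0 * integral {t..T} (\<lambda>s. c - mu)
           + d0 * sg^2 * integral {t..T} (\<lambda>s. Hi a1 a2 d0 (pbar_strat d0 theta 1 s) (pbar_strat d0 theta 2 s)))
       \<le> exp (-d0*x - d0 * integral {t..T} (\<lambda>s. c - mu)
           + d0 * sg^2 * integral {t..T} (\<lambda>s. Hi a1 a2 d0 (q 1 s) (q 2 s)))"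
      using le by (simp add: mult_left_mono)
    then show "J_ins c mu sg T d0 theta q t x \<le> J_ins c mu sg T d0 theta (pbar_strat d0 theta) t x"
      unfolding J_ins_eq[OF sg d0 a1 a2 th1 th2 q t] J_ins_eq[OF sg d0 a1 a2 th1 th2 adm t]
      using d0 by (simp add: divide_le_cancel)
  qed
qed

lemma varphi_phi0: "varphi d0 d lam i = phi0 d0 (d i) (lam (other i))"
  unfolding varphi_def phi0_def Let_def by (rule ext) simp

lemma swap_fp:
  fixes f g :: "real \<Rightarrow> real"
  assumes "\<exists>!(a, b). a > 0 \<and> b > 0 \<and> a = f b \<and> b = g a"
  shows "\<exists>!(a, b). a > 0 \<and> b > 0 \<and> a = g b \<and> b = f a"
proof -
  obtain x where x: "case x of (a, b) \<Rightarrow> a > 0 \<and> b > 0 \<and> a = f b \<and> b = g a"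
    and xu: "\<forall>y. (case y of (a, b) \<Rightarrow> a > 0 \<and> b > 0 \<and> a = f b \<and> b = g a) \<longrightarrow> y = x"
    using assms unfolding Ex1_def by blast
  obtain x1 x2 where xx: "x = (x1, x2)" by (cases x)
  show ?thesis unfolding Ex1_def
  proof (intro exI[of _ "(x2, x1)"] conjI allI impI)
    show "case (x2, x1) of (a, b) \<Rightarrow> a > 0 \<and> b > 0 \<and> a = g b \<and> b = f a"
      using x unfolding xx case_prod_conv by blast
    fix y assume y: "case y of (a, b) \<Rightarrow> a > 0 \<and> b > 0 \<and> a = g b \<and> b = f a"
    obtain y1 y2 where yy: "y = (y1, y2)" by (cases y)
    have "(y2, y1) = x" using xu[rule_format, of "(y2, y1)", unfolded case_prod_conv] y unfolding yy case_prod_conv by blast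
    then show "y = (x2, x1)" unfolding yy xx by simp
  qed
qed

lemma FP12:
  fixes d0 :: real and d lam :: "nat \<Rightarrow> real"
  assumes d0: "d0 > 0" and d1: "d 1 > 0" and d2: "d 2 > 0" and l1: "lam 1 \<ge> 0" and l2: "lam 2 \<ge> 0"
    and l12: "lam 1 * lam 2 = 0"
  shows "\<exists>!(a1, a2). a1 > 0 \<and> a2 > 0 \<and> a1 = phi0 d0 (d 1) (lam 2) a2 \<and> a2 = phi0 d0 (d 2) (lam 1) a1"
proof (cases "lam 1 = 0")
  case True
  show ?thesis using fixpoint[OF d0 d1 d2 l2] True by simp
next
  case False
  then have "lam 2 = 0" using l12 by simp
  then have "\<exists>!(a, b). a > 0 \<and> b > 0 \<and> a = phi0 d0 (d 2) (lam 1) b \<and> b = phi0 d0 (d 1) (lam 2) a"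
    using fixpoint[OF d0 d2 d1 l1] by simp
  then show ?thesis by (rule swap_fp)
qed

lemma const_adm:
  assumes "a > 0"
  shows "adm_loading T (\<lambda>s. a)"
  by (rule adm_intro[where M=a]) (use assms in auto)

theorem theorem3p7:
  fixes c mu sg T d0 :: real and d lam :: "nat \<Rightarrow> real"
  assumes "c > 0" "mu > 0" "sg > 0" "T > 0" "d0 > 0"
    and "d 1 > 0" "d 2 > 0"
    and "lam 1 \<ge> 0" "lam 2 \<ge> 0" "lam 1 * lam 2 = 0"
  shows "\<exists>theta. nash_eq sg T d0 d lam theta
     \<and> (\<forall>theta'. nash_eq sg T d0 d lam theta' \<longrightarrow>
          (\<forall>i\<in>{1,2}. AE s in lborel. s \<in> {0..T} \<longrightarrow> theta' i s = theta i s))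
     \<and> insurer_optimal c mu sg T d0 theta (pbar_strat d0 theta)
     \<and> (\<forall>i\<in>{1,2}. lam i = 0 \<and> lam (other i) > 0 \<longrightarrow>
          (\<exists>!(a, b). a > 0 \<and> b > 0 \<and>
               a = varphi d0 d lam i b \<and> b = varphi d0 d lam (other i) a)
          \<and> (\<forall>s\<in>{0..T}. theta i s = varphi d0 d lam i (theta (other i) s)
                        \<and> theta (other i) s = varphi d0 d lam (other i) (theta i s)))
     \<and> (lam 1 = 0 \<and> lam 2 = 0 \<longrightarrow>
          (\<forall>s\<in>{0..T}.
             theta 1 s = d 1 / 2 + 1/2 * sqrt ((d0 + d 1) / (d0 + d 2) * (d0 * d 1 + d0 * d 2 + d 1 * d 2))
           \<and> theta 2 s = d 2 / 2 + 1/2 * sqrt ((d0 + d 2) / (d0 + d 1) * (d0 * d 1 + d0 * d 2 + d 1 * d 2))))"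
proof -
  note sg = assms(3) and T = assms(4) and d0 = assms(5) and d1 = assms(6) and d2 = assms(7)
    and l1 = assms(8) and l2 = assms(9) and l12 = assms(10)
  note FP = FP12[OF d0 d1 d2 l1 l2 l12]
  obtain x where x: "case x of (a1, a2) \<Rightarrow> a1 > 0 \<and> a2 > 0 \<and> a1 = phi0 d0 (d 1) (lam 2) a2 \<and> a2 = phi0 d0 (d 2) (lam 1) a1"
    using FP unfolding Ex1_def by blast
  obtain a1 a2 where xx: "x = (a1, a2)" by (cases x)
  have A: "a1 > 0" "a2 > 0" "a1 = phi0 d0 (d 1) (lam 2) a2" "a2 = phi0 d0 (d 2) (lam 1) a1"
    using x unfolding xx case_prod_conv by blast+
  have uniq: "b1 = a1 \<and> b2 = a2" if "b1 > 0" "b2 > 0" "b1 = phi0 d0 (d 1) (lam 2) b2" "b2 = phi0 d0 (d 2) (lam 1) b1" for b1 b2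
  proof -
    obtain z where xu: "\<forall>y. (case y of (a1, a2) \<Rightarrow> a1 > 0 \<and> a2 > 0 \<and> a1 = phi0 d0 (d 1) (lam 2) a2 \<and> a2 = phi0 d0 (d 2) (lam 1) a1) \<longrightarrow> y = z"
      using FP unfolding Ex1_def by blast
    have e1: "(b1, b2) = z" using xu[rule_format, of "(b1, b2)", unfolded case_prod_conv] that by blast
    have e2: "(a1, a2) = z" using xu[rule_format, of "(a1, a2)", unfolded case_prod_conv] A by blast
    have "(b1, b2) = (a1, a2)" unfolding e1 e2 ..
    then show ?thesis by (rule prod.inject[THEN iffD1])
  qed
  define theta where "theta = (\<lambda>(k::nat) (s::real). if k = 1 then a1 else a2)"
  have th1: "\<And>s. theta 1 s = a1" and th2: "\<And>s. theta 2 s = a2" unfolding theta_def by auto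
  have o1: "other 1 = 2" and o2: "other 2 = 1" unfolding other_def by auto
  have th1f: "theta 1 = (\<lambda>s. a1)" and th2f: "theta 2 = (\<lambda>s. a2)" using th1 th2 by auto
  have adm1: "adm_loading T (theta 1)" unfolding th1f by (rule const_adm[OF A(1)])
  have adm2: "adm_loading T (theta 2)" unfolding th2f by (rule const_adm[OF A(2)])
  have di: "d i > 0" if "i \<in> {1,2}" for i using that d1 d2 by auto
  have li: "lam (other i) \<ge> 0" if "i \<in> {1,2}" for i using that l1 l2 o1 o2 by auto
  have admi: "adm_loading T (theta i)" if "i \<in> {1,2}" for i using that adm1 adm2 by auto
  have admo: "adm_loading T (theta (other i))" if "i \<in> {1,2}" for i using that adm1 adm2 o1 o2 by auto
  have fpi: "theta i s = phi0 d0 (d i) (lam (other i)) (theta (other i) s)" if "i \<in> {1,2}" for i s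
  proof -
    have "i = 1 \<or> i = 2" using that by simp
    then show ?thesis
    proof
      assume i1: "i = 1" show ?thesis unfolding i1 o1 th1 th2 by (rule A(3))
    next
      assume i2: "i = 2" show ?thesis unfolding i2 o2 th1 th2 by (rule A(4))
    qed
  qed
  have nash: "nash_eq sg T d0 d lam theta"
    unfolding nash_eq_def
  proof
    fix i :: nat assume i: "i \<in> {1,2}"
    show "best_response sg T d0 d lam theta i (theta i)"
      by (rule best_resp_phi[where d=d and i=i and lam=lam and theta=theta and T=T and f="theta i", OF sg d0 di[OF i] i li[OF i] admo[OF i] admi[OF i] fpi[OF i]])
  qed
  have unique: "\<forall>i\<in>{1,2}. AE s in lborel. s \<in> {0..T} \<longrightarrow> theta' i s = theta i s"
    if nt: "nash_eq sg T d0 d lam theta'" for theta'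
  proof -
    have br: "best_response sg T d0 d lam theta' i (theta' i)" if "i \<in> {1,2}" for i
      using nt that unfolding nash_eq_def by blast
    have ad: "adm_loading T (theta' i)" if "i \<in> {1,2}" for i
      using br[OF that] unfolding best_response_def by blast
    have ae1: "AE s in lborel. s \<in> {0..T} \<longrightarrow> theta' 1 s = phi0 d0 (d 1) (lam 2) (theta' 2 s)"
      using br_unique[where d=d and i=1 and lam=lam and theta=theta' and T=T, OF sg d0 d1 _ li[of 1] _ _ br[of 1]] ad[of 2] T o1 by simp
    have ae2: "AE s in lborel. s \<in> {0..T} \<longrightarrow> theta' 2 s = phi0 d0 (d 2) (lam 1) (theta' 1 s)"
      using br_unique[where d=d and i=2 and lam=lam and theta=theta' and T=T, OF sg d0 d2 _ li[of 2] _ _ br[of 2]] ad[of 1] T o2 by simp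
    have pos1: "\<And>s. s \<in> {0..T} \<Longrightarrow> theta' 1 s > 0" using adm_pos_bdd(2)[OF ad[of 1]] by simp
    have pos2: "\<And>s. s \<in> {0..T} \<Longrightarrow> theta' 2 s > 0" using adm_pos_bdd(2)[OF ad[of 2]] by simp
    have "AE s in lborel. s \<in> {0..T} \<longrightarrow> theta' 1 s = a1 \<and> theta' 2 s = a2"
      using ae1 ae2
    proof eventually_elim
      case (elim s)
      show ?case
      proof
        assume s: "s \<in> {0..T}"
        show "theta' 1 s = a1 \<and> theta' 2 s = a2"
          by (rule uniq[OF pos1[OF s] pos2[OF s]]) (use elim s in blast)+
      qed
    qed
    then show ?thesis
    proof (intro ballI)
      fix i :: nat assume i: "i \<in> {1,2}"
      assume h: "AE s in lborel. s \<in> {0..T} \<longrightarrow> theta' 1 s = a1 \<and> theta' 2 s = a2"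
      show "AE s in lborel. s \<in> {0..T} \<longrightarrow> theta' i s = theta i s"
        using h by eventually_elim (use i th1 th2 in auto)
    qed
  qed
  have ins: "insurer_optimal c mu sg T d0 theta (pbar_strat d0 theta)"
    by (rule insurer_opt[OF sg d0 A(1) A(2) th1 th2])
  have part1: "(\<exists>!(a, b). a > 0 \<and> b > 0 \<and> a = varphi d0 d lam i b \<and> b = varphi d0 d lam (other i) a)
          \<and> (\<forall>s\<in>{0..T}. theta i s = varphi d0 d lam i (theta (other i) s)
                        \<and> theta (other i) s = varphi d0 d lam (other i) (theta i s))"
    if i: "i \<in> {1,2}" for i
  proof (cases "i = 1")
    case True
    have "\<forall>s\<in>{0..T}. theta 1 s = phi0 d0 (d 1) (lam 2) (theta 2 s) \<and> theta 2 s = phi0 d0 (d 2) (lam 1) (theta 1 s)"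
      using fpi[of 1] fpi[of 2] unfolding o1 o2 by blast
    then show ?thesis unfolding varphi_phi0 True o1 o2 by (rule conjI[OF FP])
  next
    case False
    then have i2: "i = 2" using i by simp
    have S: "\<forall>s\<in>{0..T}. theta 2 s = phi0 d0 (d 2) (lam 1) (theta 1 s) \<and> theta 1 s = phi0 d0 (d 1) (lam 2) (theta 2 s)"
      using fpi[of 1] fpi[of 2] unfolding o1 o2 by blast
    have E: "\<exists>!(a, b). a > 0 \<and> b > 0 \<and> a = phi0 d0 (d 2) (lam 1) b \<and> b = phi0 d0 (d 1) (lam 2) a"
      by (rule swap_fp[where f="phi0 d0 (d 1) (lam 2)" and g="phi0 d0 (d 2) (lam 1)", OF FP])
    show ?thesis unfolding varphi_phi0 i2 o2 o1 by (rule conjI[OF E S])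
  qed
  have part2: "\<forall>s\<in>{0..T}.
             theta 1 s = d 1 / 2 + 1/2 * sqrt ((d0 + d 1) / (d0 + d 2) * (d0 * d 1 + d0 * d 2 + d 1 * d 2))
           \<and> theta 2 s = d 2 / 2 + 1/2 * sqrt ((d0 + d 2) / (d0 + d 1) * (d0 * d 1 + d0 * d 2 + d 1 * d 2))"
    if z: "lam 1 = 0 \<and> lam 2 = 0"
  proof -
    have ea: "a1 = phi0 d0 (d 1) 0 a2" using A(3) z by simp
    have eb: "a2 = phi0 d0 (d 2) 0 a1" using A(4) z by simp
    show ?thesis using explicit_a[OF d0 d1 d2 A(1) A(2) ea eb] explicit_b[OF d0 d1 d2 A(1) A(2) ea eb] th1 th2
      by simp
  qed
  show ?thesis
  proof (rule exI[of _ theta], intro conjI)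
    show "nash_eq sg T d0 d lam theta" by (rule nash)
    show "\<forall>theta'. nash_eq sg T d0 d lam theta' \<longrightarrow>
          (\<forall>i\<in>{1,2}. AE s in lborel. s \<in> {0..T} \<longrightarrow> theta' i s = theta i s)"
      using unique by (intro allI impI)
    show "insurer_optimal c mu sg T d0 theta (pbar_strat d0 theta)" by (rule ins)
    show "\<forall>i\<in>{1,2}. lam i = 0 \<and> lam (other i) > 0 \<longrightarrow>
          (\<exists>!(a, b). a > 0 \<and> b > 0 \<and>
               a = varphi d0 d lam i b \<and> b = varphi d0 d lam (other i) a)
          \<and> (\<forall>s\<in>{0..T}. theta i s = varphi d0 d lam i (theta (other i) s)
                        \<and> theta (other i) s = varphi d0 d lam (other i) (theta i s))"
    proof (intro ballI impI)
      fix i :: nat assume i: "i \<in> {1,2}"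
      show "(\<exists>!(a, b). a > 0 \<and> b > 0 \<and>
               a = varphi d0 d lam i b \<and> b = varphi d0 d lam (other i) a)
          \<and> (\<forall>s\<in>{0..T}. theta i s = varphi d0 d lam i (theta (other i) s)
                        \<and> theta (other i) s = varphi d0 d lam (other i) (theta i s))" by (rule part1[OF i])
    qed
    show "lam 1 = 0 \<and> lam 2 = 0 \<longrightarrow>
          (\<forall>s\<in>{0..T}.
             theta 1 s = d 1 / 2 + 1/2 * sqrt ((d0 + d 1) / (d0 + d 2) * (d0 * d 1 + d0 * d 2 + d 1 * d 2))
           \<and> theta 2 s = d 2 / 2 + 1/2 * sqrt ((d0 + d 2) / (d0 + d 1) * (d0 * d 1 + d0 * d 2 + d 1 * d 2)))"
      using part2 by (rule impI)
  qed
qed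

end
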